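(* Under the setting of the context, let $f:E\times\mathbb R^d\to\mathbb R$ be bounded and Lipschitz continuous with respect to the second variable, uniformly in the first. Then for all $T\ge0$, $$\sup_{0\le t\le T}\ m^{-2}\Bigl|\sum_{k=0}^{\lfloor m^2t\rfloor-1}f(\xi_k,S_k/m)-\sum_{k=0}^{\lfloor m^2t\rfloor-1}\bar f(S_k/m)\Bigr|\longrightarrow0$$ in probability as $m\to+\infty$, where $\bar f(y)=\sum_{i\in E}f(i,y)\mu(i)$.
   Context: Let $d\ge1$, $(e_1,\dots,e_d)$ the canonical basis, $\mathcal V=\{\pm e_1,\dots,\pm e_d\}$. Let $E$ be a finite set and $P$ an irreducible and aperiodic stochastic matrix on $E$ with unique invariant probability $\mu$. For $k\in E$, $y\in\mathbb R^d$, $p(k,y,\cdot)$ is a probability on $\mathcal V$, with $y\mapsto p(k,y,u)$ twice continuously differentiable with bounded derivatives; $g(k,y)=\sum_uu\,p(k,y,u)$ satisfies $\sum_k\mu(k)g(k,y)=0$ for all $y$. For an integer $m\ge1$, $(\xi_n,S_n)_{n\ge0}$ is a Markov chain on $E\times\mathbb Z^d$ (depending on $m$) with $S_0=0$ and $\mathbb P(\xi_{n+1}=k,S_{n+1}=S_n+u\mid\xi_0,\dots,\xi_n,S_0,\dots,S_n)=P(\xi_n,k)p(\xi_n,S_n/m,u)$ for $k\in E$, $u\in\mathcal V$. *)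

theory Defs
  imports "HOL-Probability.Probability"
begin

fun mpow :: "('e::finite \<Rightarrow> 'e \<Rightarrow> real) \<Rightarrow> nat \<Rightarrow> 'e \<Rightarrow> 'e \<Rightarrow> real" where
  "mpow P 0 i j = (if i = j then 1 else 0)"
| "mpow P (Suc n) i j = (\<Sum>k\<in>UNIV. mpow P n i k * P k j)"

definition stochastic :: "('e::finite \<Rightarrow> 'e \<Rightarrow> real) \<Rightarrow> bool" where
  "stochastic P \<longleftrightarrow> (\<forall>i j. P i j \<ge> 0) \<and> (\<forall>i. (\<Sum>j\<in>UNIV. P i j) = 1)"

definition irreducible_mc :: "('e::finite \<Rightarrow> 'e \<Rightarrow> real) \<Rightarrow> bool" where
  "irreducible_mc P \<longleftrightarrow> (\<forall>i j. \<exists>n. mpow P n i j > 0)"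

definition aperiodic_mc :: "('e::finite \<Rightarrow> 'e \<Rightarrow> real) \<Rightarrow> bool" where
  "aperiodic_mc P \<longleftrightarrow> (\<forall>i. Gcd {n::nat. n > 0 \<and> mpow P n i i > 0} = 1)"

definition invariant_prob :: "('e::finite \<Rightarrow> 'e \<Rightarrow> real) \<Rightarrow> ('e \<Rightarrow> real) \<Rightarrow> bool" where
  "invariant_prob P \<mu> \<longleftrightarrow> (\<forall>i. \<mu> i \<ge> 0) \<and> (\<Sum>i\<in>UNIV. \<mu> i) = 1 \<and>
     (\<forall>j. (\<Sum>i\<in>UNIV. \<mu> i * P i j) = \<mu> j)"

definition unit_steps :: "(int ^ 'd) set" where
  "unit_steps = {axis i 1 | i. True} \<union> {axis i (-1) | i. True}"

definition rescale :: "nat \<Rightarrow> int ^ 'd \<Rightarrow> real ^ 'd" where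
  "rescale m s = (\<chi> i. real_of_int (s $ i) / real m)"

definition fbar :: "('e::finite \<Rightarrow> real ^ 'd \<Rightarrow> real) \<Rightarrow> ('e \<Rightarrow> real) \<Rightarrow> real ^ 'd \<Rightarrow> real" where
  "fbar f \<mu> y = (\<Sum>i\<in>UNIV. f i y * \<mu> i)"

definition drift :: "('e \<Rightarrow> real ^ 'd \<Rightarrow> int ^ 'd \<Rightarrow> real) \<Rightarrow> 'e \<Rightarrow> real ^ 'd \<Rightarrow> real ^ 'd" where
  "drift p k y = (\<Sum>u\<in>unit_steps. p k y u *\<^sub>R (\<chi> i. real_of_int (u $ i)))"

end

theory Submission
  imports Defs
begin

lemma inv_orth_mu:
  fixes P :: "'e::finite \<Rightarrow> 'e \<Rightarrow> real" and \<mu> :: "'e \<Rightarrow> real" and x :: "'e \<Rightarrow> real"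
  assumes st: "stochastic P" and mu: "invariant_prob P \<mu>"
    and uniq: "\<And>\<nu>. invariant_prob P \<nu> \<Longrightarrow> \<nu> = \<mu>"
    and xinv: "\<And>j. (\<Sum>i\<in>UNIV. x i * P i j) = x j"
  shows "\<exists>c. \<forall>i. x i = c * \<mu> i"
proof -
  have Pnn: "\<And>i j. P i j \<ge> 0" and Psum: "\<And>i. (\<Sum>j\<in>UNIV. P i j) = 1"
    using st by (auto simp: stochastic_def)
  define a where "a i = \<bar>x i\<bar>" for i
  have ale: "a j \<le> (\<Sum>i\<in>UNIV. a i * P i j)" for j
  proof -
    have "a j = \<bar>\<Sum>i\<in>UNIV. x i * P i j\<bar>" using xinv[of j] by (simp add: a_def)
    also have "\<dots> \<le> (\<Sum>i\<in>UNIV. \<bar>x i * P i j\<bar>)" by (rule sum_abs)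
    also have "\<dots> = (\<Sum>i\<in>UNIV. a i * P i j)" using Pnn by (simp add: a_def abs_mult)
    finally show ?thesis .
  qed
  have "(\<Sum>j\<in>UNIV. (\<Sum>i\<in>UNIV. a i * P i j)) = (\<Sum>i\<in>UNIV. a i * (\<Sum>j\<in>UNIV. P i j))"
    by (subst sum.swap) (simp add: sum_distrib_left)
  also have "\<dots> = (\<Sum>i\<in>UNIV. a i)" using Psum by simp
  finally have "(\<Sum>j\<in>UNIV. (\<Sum>i\<in>UNIV. a i * P i j) - a j) = 0"
    by (simp add: sum_subtractf)
  then have "\<forall>j\<in>UNIV. (\<Sum>i\<in>UNIV. a i * P i j) - a j = 0"
    using ale by (subst sum_nonneg_eq_0_iff[symmetric]) auto
  then have ainv: "\<And>j. (\<Sum>i\<in>UNIV. a i * P i j) = a j" by auto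
  have key: "\<exists>c. \<forall>i. q i = c * \<mu> i"
    if qnn: "\<And>i. q i \<ge> 0" and qinv: "\<And>j. (\<Sum>i\<in>UNIV. q i * P i j) = q j" for q :: "'e \<Rightarrow> real"
  proof (cases "(\<Sum>i\<in>UNIV. q i) = 0")
    case True
    then have "\<forall>i\<in>UNIV. q i = 0" using qnn by (subst sum_nonneg_eq_0_iff[symmetric]) auto
    then show ?thesis by (intro exI[of _ 0]) auto
  next
    case False
    define s where "s = (\<Sum>i\<in>UNIV. q i)"
    have s: "s > 0" using False qnn unfolding s_def by (metis less_eq_real_def sum_nonneg)
    have "invariant_prob P (\<lambda>i. q i / s)"
      unfolding invariant_prob_def
    proof (intro conjI allI)
      show "0 \<le> q i / s" for i using qnn s by simp
      show "(\<Sum>i\<in>UNIV. q i / s) = 1" using s by (simp add: s_def[symmetric] sum_divide_distrib[symmetric])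
      show "(\<Sum>i\<in>UNIV. q i / s * P i j) = q j / s" for j
        using qinv[of j] by (simp add: sum_divide_distrib[symmetric])
    qed
    then have "(\<lambda>i. q i / s) = \<mu>" by (rule uniq)
    then have "\<forall>i. q i = s * \<mu> i" using s by (auto simp: fun_eq_iff field_simps)
    then show ?thesis by blast
  qed
  have q1: "\<exists>c. \<forall>i. (a i + x i) / 2 = c * \<mu> i"
  proof (rule key)
    show "0 \<le> (a i + x i) / 2" for i by (simp add: a_def)
    show "(\<Sum>i\<in>UNIV. (a i + x i) / 2 * P i j) = (a j + x j) / 2" for j
      using ainv[of j] xinv[of j] by (simp add: sum_divide_distrib[symmetric] sum.distrib distrib_right)
  qed
  have q2: "\<exists>c. \<forall>i. (a i - x i) / 2 = c * \<mu> i"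
  proof (rule key)
    show "0 \<le> (a i - x i) / 2" for i by (simp add: a_def)
    show "(\<Sum>i\<in>UNIV. (a i - x i) / 2 * P i j) = (a j - x j) / 2" for j
      using ainv[of j] xinv[of j] by (simp add: sum_divide_distrib[symmetric] sum_subtractf left_diff_distrib)
  qed
  obtain c1 where c1: "\<forall>i. (a i + x i) / 2 = c1 * \<mu> i" using q1 by blast
  obtain c2 where c2: "\<forall>i. (a i - x i) / 2 = c2 * \<mu> i" using q2 by blast
  have "\<forall>i. x i = (c1 - c2) * \<mu> i"
  proof
    fix i
    have "x i = (a i + x i) / 2 - (a i - x i) / 2" by (simp add: field_simps)
    also have "\<dots> = (c1 - c2) * \<mu> i" using c1 c2 by (simp add: left_diff_distrib)
    finally show "x i = (c1 - c2) * \<mu> i" .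
  qed
  then show ?thesis by blast
qed

lemma poisson:
  fixes P :: "'e::finite \<Rightarrow> 'e \<Rightarrow> real" and \<mu> :: "'e \<Rightarrow> real"
    and h :: "'e \<Rightarrow> 'y::real_normed_vector \<Rightarrow> real"
  assumes st: "stochastic P" and mu: "invariant_prob P \<mu>"
    and uniq: "\<And>\<nu>. invariant_prob P \<nu> \<Longrightarrow> \<nu> = \<mu>"
    and hB: "\<And>i y. \<bar>h i y\<bar> \<le> B"
    and hL: "\<And>i y z. \<bar>h i y - h i z\<bar> \<le> L * norm (y - z)"
    and hc: "\<And>y. (\<Sum>i\<in>UNIV. \<mu> i * h i y) = 0"
  shows "\<exists>\<phi> K Lp. (\<forall>i y. \<phi> i y - (\<Sum>j\<in>UNIV. P i j * \<phi> j y) = h i y) \<and>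
     (\<forall>i y. \<bar>\<phi> i y\<bar> \<le> K) \<and> (\<forall>i y z. \<bar>\<phi> i y - \<phi> i z\<bar> \<le> Lp * norm (y - z))"
proof -
  define A :: "real^'e \<Rightarrow> real^'e" where "A x = (\<chi> i. x$i - (\<Sum>j\<in>UNIV. P i j * x$j))" for x
  have linA: "linear A"
    by (rule linearI) (simp_all add: A_def vec_eq_iff sum.distrib algebra_simps sum_distrib_left)
  define mv :: "real^'e" where "mv = (\<chi> i. \<mu> i)"
  have orth_range: "mv \<bullet> A w = 0" for w
  proof -
    have "mv \<bullet> A w = (\<Sum>i\<in>UNIV. \<mu> i * w$i) - (\<Sum>i\<in>UNIV. \<Sum>j\<in>UNIV. \<mu> i * P i j * w$j)"
      by (simp add: mv_def A_def inner_vec_def right_diff_distrib sum_subtractf sum_distrib_left mult.assoc)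
    also have "(\<Sum>i\<in>UNIV. \<Sum>j\<in>UNIV. \<mu> i * P i j * w$j) = (\<Sum>j\<in>UNIV. (\<Sum>i\<in>UNIV. \<mu> i * P i j) * w$j)"
      by (subst sum.swap) (simp add: sum_distrib_right)
    also have "\<dots> = (\<Sum>j\<in>UNIV. \<mu> j * w$j)"
      using mu by (simp add: invariant_prob_def)
    finally show ?thesis by simp
  qed
  have perp: "\<exists>c. x = c *\<^sub>R mv" if xo: "\<And>w. w \<in> range A \<Longrightarrow> x \<bullet> w = 0" for x
  proof -
    have "(\<Sum>i\<in>UNIV. x$i * P i j) = x$j" for j
    proof -
      have "x \<bullet> A (axis j 1) = 0" using xo by auto
      moreover have "x \<bullet> A (axis j 1) = x$j - (\<Sum>i\<in>UNIV. x$i * P i j)"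
        by (simp add: A_def inner_vec_def axis_def right_diff_distrib sum_subtractf
              mult.commute[of "P _ _"] if_distrib[where f="\<lambda>t. t * _"] if_distrib[where f="\<lambda>t. _ * t"] cong: if_cong)
      ultimately show ?thesis by simp
    qed
    then obtain c where "\<forall>i. x$i = c * \<mu> i"
      using inv_orth_mu[OF st mu uniq, of "\<lambda>i. x$i"] by blast
    then have "x = c *\<^sub>R mv" by (simp add: vec_eq_iff mv_def)
    then show ?thesis by blast
  qed
  have mvnz: "mv \<bullet> mv > 0"
  proof -
    have "mv \<noteq> 0"
    proof
      assume "mv = 0"
      then have "\<forall>i. \<mu> i = 0" by (simp add: mv_def vec_eq_iff)
      then show False using mu by (simp add: invariant_prob_def)
    qed
    then show ?thesis by simp
  qed
  have inrange: "v \<in> range A" if vc: "mv \<bullet> v = 0" for v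
  proof -
    obtain y z where y: "y \<in> span (range A)" and z: "\<And>w. w \<in> span (range A) \<Longrightarrow> orthogonal z w"
      and v: "v = y + z"
      using orthogonal_subspace_decomp_exists[of "range A" v] by blast
    have sp: "span (range A) = range A"
      by (simp add: linA linear_subspace_image span_eq_iff)
    obtain c where zc: "z = c *\<^sub>R mv"
      using perp[of z] z sp by (auto simp: orthogonal_def)
    obtain w where yw: "y = A w" using y sp by auto
    have "0 = mv \<bullet> v" using vc by simp
    also have "\<dots> = c * (mv \<bullet> mv)" using v zc yw orth_range by (simp add: inner_add_right)
    finally have "c = 0" using mvnz by simp
    then show ?thesis using v zc yw by simp
  qed
  obtain g where glin: "linear g" and ginv: "\<forall>v\<in>range A. A (g v) = v"
    using linear_exists_right_inverse_on[OF linA subspace_UNIV] by auto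
  obtain Bg where Bg: "Bg > 0" "\<And>x. norm (g x) \<le> Bg * norm x"
    using linear_bounded_pos[OF glin] by blast
  define hv where "hv y = (\<chi> i. h i y)" for y
  define \<phi> where "\<phi> i y = g (hv y) $ i" for i y
  have hvr: "hv y \<in> range A" for y
    by (rule inrange) (simp add: mv_def hv_def inner_vec_def hc)
  have eq: "\<phi> i y - (\<Sum>j\<in>UNIV. P i j * \<phi> j y) = h i y" for i y
  proof -
    have "A (g (hv y)) = hv y" using ginv hvr by blast
    then have "A (g (hv y)) $ i = h i y" by (simp add: hv_def)
    then show ?thesis by (simp add: A_def \<phi>_def)
  qed
  have bnd: "\<bar>\<phi> i y\<bar> \<le> Bg * (real CARD('e) * B)" for i y
  proof -
    have "\<bar>\<phi> i y\<bar> \<le> norm (g (hv y))" unfolding \<phi>_def by (rule component_le_norm_cart)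
    also have "\<dots> \<le> Bg * norm (hv y)" by (rule Bg)
    also have "norm (hv y) \<le> (\<Sum>i\<in>UNIV. \<bar>hv y $ i\<bar>)" by (rule norm_le_l1_cart)
    also have "\<dots> \<le> (\<Sum>i\<in>(UNIV::'e set). B)" by (rule sum_mono) (simp add: hv_def hB)
    finally show ?thesis using Bg by (simp add: mult_left_mono)
  qed
  have lip: "\<bar>\<phi> i y - \<phi> i z\<bar> \<le> (Bg * (real CARD('e) * L)) * norm (y - z)" for i y z
  proof -
    have "\<phi> i y - \<phi> i z = g (hv y - hv z) $ i" unfolding \<phi>_def by (simp add: linear_diff[OF glin])
    then have "\<bar>\<phi> i y - \<phi> i z\<bar> \<le> norm (g (hv y - hv z))" by (simp add: component_le_norm_cart)
    also have "\<dots> \<le> Bg * norm (hv y - hv z)" by (rule Bg)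
    also have "norm (hv y - hv z) \<le> (\<Sum>i\<in>UNIV. \<bar>(hv y - hv z) $ i\<bar>)" by (rule norm_le_l1_cart)
    also have "\<dots> \<le> (\<Sum>i\<in>(UNIV::'e set). L * norm (y - z))" by (rule sum_mono) (simp add: hv_def hL)
    finally show ?thesis using Bg by (simp add: mult_left_mono mult.assoc)
  qed
  show ?thesis using eq bnd lip by blast
qed

locale pchain = prob_space N for N :: "'a measure" +
  fixes X :: "nat \<Rightarrow> 'a \<Rightarrow> 'e::finite" and Z :: "nat \<Rightarrow> 'a \<Rightarrow> int^'d::finite"
    and tr :: "'e \<Rightarrow> int^'d \<Rightarrow> 'e \<Rightarrow> int^'d \<Rightarrow> real" and U :: "(int^'d) set"
  assumes X_meas[measurable]: "\<And>n. X n \<in> measurable N (count_space UNIV)"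
    and Z_meas[measurable]: "\<And>n. Z n \<in> measurable N (count_space UNIV)"
    and Z0: "\<And>\<omega>. \<omega> \<in> space N \<Longrightarrow> Z 0 \<omega> = 0"
    and tr_nn: "\<And>k s j u. tr k s j u \<ge> 0"
    and tr_sum: "\<And>k s. (\<Sum>j\<in>UNIV. \<Sum>u\<in>U. tr k s j u) = 1"
    and U_fin: "finite U"
    and chain: "\<And>n ks ss. ss 0 = 0 \<Longrightarrow>
       measure N {\<omega> \<in> space N. \<forall>i\<le>n. X i \<omega> = ks i \<and> Z i \<omega> = ss i}
       = measure N {\<omega> \<in> space N. X 0 \<omega> = ks 0} *
         (\<Prod>i<n. tr (ks i) (ss i) (ks (Suc i)) (ss (Suc i) - ss i))"
begin

definition pl :: "nat \<Rightarrow> 'a \<Rightarrow> ('e \<times> (int^'d)) list" where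
  "pl n \<omega> = map (\<lambda>i. (X i \<omega>, Z i \<omega>)) [0..<Suc n]"

definition cyl :: "('e \<times> (int^'d)) list \<Rightarrow> 'a set" where
  "cyl xs = {\<omega> \<in> space N. pl (length xs - 1) \<omega> = xs}"

definition w :: "('e \<times> (int^'d)) list \<Rightarrow> real" where
  "w xs = measure N (cyl xs)"

definition ext :: "('e \<times> (int^'d)) list \<Rightarrow> 'e \<Rightarrow> int^'d \<Rightarrow> ('e \<times> (int^'d)) list" where
  "ext ys j u = ys @ [(j, snd (last ys) + u)]"

fun V :: "nat \<Rightarrow> ('e \<times> (int^'d)) list set" where
  "V 0 = (\<lambda>k. [(k, 0)]) ` UNIV"
| "V (Suc n) = (\<lambda>(ys, j, u). ext ys j u) ` (V n \<times> UNIV \<times> U)"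

lemma V_len: "xs \<in> V n \<Longrightarrow> length xs = Suc n \<and> snd (xs ! 0) = 0"
  by (induction n arbitrary: xs) (auto simp: ext_def nth_append)

lemma V_fin: "finite (V n)"
  by (induction n) (auto intro!: finite_imageI simp: U_fin)

lemma ext_inj: "inj_on (\<lambda>(ys, j, u). ext ys j u) (V n \<times> UNIV \<times> U)"
proof -
  have *: "ys = ys' \<and> j = j' \<and> u = u'"
    if a: "ys \<in> V n" "ys' \<in> V n" and e: "ext ys j u = ext ys' j' u'" for ys j u ys' j' u'
  proof -
    have l: "length ys = length ys'" using a V_len by metis
    from e l have "ys = ys'" "j = j'" "snd (last ys) + u = snd (last ys') + u'"
      by (auto simp: ext_def)
    then show ?thesis by simp
  qed
  show ?thesis unfolding inj_on_def using * by auto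
qed

lemma sum_V_Suc: "(\<Sum>xs\<in>V (Suc n). F xs) = (\<Sum>ys\<in>V n. \<Sum>j\<in>UNIV. \<Sum>u\<in>U. F (ext ys j u))"
  by (simp add: sum.reindex[OF ext_inj] sum.cartesian_product prod.case_distrib)

lemma pl_nth: "i \<le> n \<Longrightarrow> pl n \<omega> ! i = (X i \<omega>, Z i \<omega>)"
  by (simp add: pl_def nth_map_upt del: upt_Suc)

lemma pl_len[simp]: "length (pl n \<omega>) = Suc n"
  by (simp add: pl_def)

lemma cyl_eq:
  assumes "length xs = Suc n"
  shows "cyl xs = {\<omega> \<in> space N. \<forall>i\<le>n. X i \<omega> = fst (xs ! i) \<and> Z i \<omega> = snd (xs ! i)}"
proof -
  have "pl n \<omega> = xs \<longleftrightarrow> (\<forall>i\<le>n. X i \<omega> = fst (xs ! i) \<and> Z i \<omega> = snd (xs ! i))" for \<omega>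
    using assms by (auto simp: list_eq_iff_nth_eq pl_nth less_Suc_eq_le prod_eq_iff)
  then show ?thesis using assms by (simp add: cyl_def)
qed

lemma cyl_sets: "{\<omega> \<in> space N. \<forall>i\<le>n. X i \<omega> = ks i \<and> Z i \<omega> = ss i} \<in> sets N"
  by measurable

lemma pl_meas: "pl n \<in> measurable N (count_space UNIV)"
proof (rule measurable_count_space_eq2_countable[THEN iffD2], intro conjI ballI)
  show "pl n \<in> space N \<rightarrow> UNIV" by simp
next
  fix xs
  show "pl n -` {xs} \<inter> space N \<in> sets N"
  proof (cases "length xs = Suc n")
    case True
    have "pl n -` {xs} \<inter> space N = cyl xs" by (auto simp: cyl_def True)
    then show ?thesis using cyl_eq[OF True] cyl_sets by simp
  next
    case False
    then have "pl n -` {xs} \<inter> space N = {}" by auto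
    then show ?thesis by simp
  qed
qed

lemma pred_sets: "{\<omega> \<in> space N. Q (pl n \<omega>)} \<in> sets N"
proof -
  have "{\<omega> \<in> space N. Q (pl n \<omega>)} = pl n -` {xs. Q xs} \<inter> space N" by auto
  then show ?thesis using measurable_sets[OF pl_meas, of "{xs. Q xs}" n] by simp
qed

lemma cyl_in_sets: "cyl xs \<in> sets N"
  unfolding cyl_def by (rule pred_sets)

lemma w_nn: "w xs \<ge> 0" by (simp add: w_def)

lemma w_chain:
  assumes "length xs = Suc n" "snd (xs ! 0) = 0"
  shows "w xs = measure N {\<omega> \<in> space N. X 0 \<omega> = fst (xs ! 0)} *
    (\<Prod>i<n. tr (fst (xs ! i)) (snd (xs ! i)) (fst (xs ! Suc i)) (snd (xs ! Suc i) - snd (xs ! i)))"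
  unfolding w_def cyl_eq[OF assms(1)]
  by (rule chain[of "\<lambda>i. snd (xs ! i)" n "\<lambda>i. fst (xs ! i)"]) (use assms in simp)

lemma w_ext:
  assumes ys: "ys \<in> V n"
  shows "w (ext ys j u) = w ys * tr (fst (last ys)) (snd (last ys)) j u"
proof -
  have l: "length ys = Suc n" and z: "snd (ys ! 0) = 0" using V_len[OF ys] by auto
  have le: "ext ys j u ! i = ys ! i" if "i \<le> n" for i using that l by (simp add: ext_def nth_append)
  have lst: "last ys = ys ! n" using l last_conv_nth[of ys] by fastforce
  have en: "ext ys j u ! Suc n = (j, snd (last ys) + u)" using l by (simp add: ext_def nth_append)
  have l2: "length (ext ys j u) = Suc (Suc n)" using l by (simp add: ext_def)
  have z2: "snd (ext ys j u ! 0) = 0" using le[of 0] z by simp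
  have "w (ext ys j u) = measure N {\<omega> \<in> space N. X 0 \<omega> = fst (ys ! 0)} *
    ((\<Prod>i<n. tr (fst (ys ! i)) (snd (ys ! i)) (fst (ys ! Suc i)) (snd (ys ! Suc i) - snd (ys ! i))) *
      tr (fst (last ys)) (snd (last ys)) j u)"
    unfolding w_chain[OF l2 z2] prod.lessThan_Suc le[OF order.refl] le[of 0, simplified] en lst
    by (simp add: le)
  also have "\<dots> = w ys * tr (fst (last ys)) (snd (last ys)) j u"
    unfolding w_chain[OF l z] by simp
  finally show ?thesis .
qed

lemma sum_w: "(\<Sum>xs\<in>V n. w xs) = 1"
proof (induction n)
  case 0
  have inj: "inj (\<lambda>k::'e. [(k, 0::int^'d)])" by (auto intro: injI)
  have "(\<Sum>xs\<in>V 0. w xs) = (\<Sum>k\<in>UNIV. measure N {\<omega> \<in> space N. X 0 \<omega> = k})"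
    by (simp add: sum.reindex[OF inj] w_chain)
  also have "\<dots> = measure N (\<Union>k. {\<omega> \<in> space N. X 0 \<omega> = k})"
    by (rule finite_measure_finite_Union[symmetric]) (auto simp: disjoint_family_on_def)
  also have "(\<Union>k. {\<omega> \<in> space N. X 0 \<omega> = k}) = space N" by auto
  finally show ?case by (simp add: prob_space)
next
  case (Suc n)
  have "(\<Sum>xs\<in>V (Suc n). w xs) = (\<Sum>ys\<in>V n. \<Sum>j\<in>UNIV. \<Sum>u\<in>U. w (ext ys j u))"
    by (rule sum_V_Suc)
  also have "\<dots> = (\<Sum>ys\<in>V n. w ys * (\<Sum>j\<in>UNIV. \<Sum>u\<in>U. tr (fst (last ys)) (snd (last ys)) j u))"
    by (intro sum.cong refl) (simp add: w_ext sum_distrib_left)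
  also have "\<dots> = 1" using Suc by (simp add: tr_sum)
  finally show ?case .
qed

lemma prob_bound:
  "measure N {\<omega> \<in> space N. Q (pl n \<omega>)} \<le> (\<Sum>xs\<in>{xs \<in> V n. Q xs}. w xs)"
proof -
  define C where "C = (\<Union>xs\<in>V n. cyl xs)"
  have disj: "disjoint_family_on cyl A" if "A \<subseteq> V n" for A
    unfolding disjoint_family_on_def
  proof (intro ballI impI)
    fix a b assume ab: "a \<in> A" "b \<in> A" "a \<noteq> b"
    then have "length a = length b" using that V_len by (metis subsetD)
    then show "cyl a \<inter> cyl b = {}" using ab by (auto simp: cyl_def)
  qed
  have mC: "measure N C = 1"
    unfolding C_def
    by (subst finite_measure_finite_Union) (auto simp: V_fin cyl_in_sets disj sum_w[of n, unfolded w_def])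
  have Csets: "C \<in> sets N" unfolding C_def using V_fin cyl_in_sets by auto
  have sub: "{\<omega> \<in> space N. Q (pl n \<omega>)} \<subseteq> (\<Union>xs\<in>{xs \<in> V n. Q xs}. cyl xs) \<union> (space N - C)"
  proof
    fix \<omega> assume a: "\<omega> \<in> {\<omega> \<in> space N. Q (pl n \<omega>)}"
    show "\<omega> \<in> (\<Union>xs\<in>{xs \<in> V n. Q xs}. cyl xs) \<union> (space N - C)"
    proof (cases "pl n \<omega> \<in> V n")
      case True
      then show ?thesis using a by (auto simp: cyl_def)
    next
      case False
      have "\<omega> \<notin> C"
      proof
        assume "\<omega> \<in> C"
        then obtain xs where "xs \<in> V n" "\<omega> \<in> cyl xs" by (auto simp: C_def)
        then show False using False V_len[of xs n] by (auto simp: cyl_def)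
      qed
      then show ?thesis using a by auto
    qed
  qed
  have fs: "finite {xs \<in> V n. Q xs}" using V_fin by auto
  have "measure N {\<omega> \<in> space N. Q (pl n \<omega>)} \<le> measure N ((\<Union>xs\<in>{xs \<in> V n. Q xs}. cyl xs) \<union> (space N - C))"
    by (rule finite_measure_mono[OF sub]) (use fs cyl_in_sets Csets in auto)
  also have "\<dots> \<le> measure N (\<Union>xs\<in>{xs \<in> V n. Q xs}. cyl xs) + measure N (space N - C)"
    by (rule measure_Un_le) (use fs cyl_in_sets Csets in auto)
  also have "measure N (space N - C) = 0" using prob_compl[OF Csets] mC by simp
  also have "measure N (\<Union>xs\<in>{xs \<in> V n. Q xs}. cyl xs) = (\<Sum>xs\<in>{xs \<in> V n. Q xs}. w xs)"
    unfolding w_def by (rule finite_measure_finite_Union) (use fs cyl_in_sets disj in auto)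
  finally show ?thesis by simp
qed

definition Qf :: "('e \<Rightarrow> int^'d \<Rightarrow> real) \<Rightarrow> 'e \<Rightarrow> int^'d \<Rightarrow> real" where
  "Qf \<phi> k s = (\<Sum>j\<in>UNIV. \<Sum>u\<in>U. tr k s j u * \<phi> j (s + u))"

definition Dm :: "('e \<Rightarrow> int^'d \<Rightarrow> real) \<Rightarrow> (nat \<Rightarrow> 'e) \<Rightarrow> (nat \<Rightarrow> int^'d) \<Rightarrow> nat \<Rightarrow> real" where
  "Dm \<phi> a b k = \<phi> (a (Suc k)) (b (Suc k)) - Qf \<phi> (a k) (b k)"

definition Mart :: "('e \<Rightarrow> int^'d \<Rightarrow> real) \<Rightarrow> (nat \<Rightarrow> 'e) \<Rightarrow> (nat \<Rightarrow> int^'d) \<Rightarrow> nat \<Rightarrow> real" where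
  "Mart \<phi> a b n = (\<Sum>k<n. Dm \<phi> a b k)"

definition ax :: "('e \<times> (int^'d)) list \<Rightarrow> nat \<Rightarrow> 'e" where "ax xs i = fst (xs ! i)"
definition bx :: "('e \<times> (int^'d)) list \<Rightarrow> nat \<Rightarrow> int^'d" where "bx xs i = snd (xs ! i)"

lemma Mart_cong:
  assumes "\<And>i. i \<le> n \<Longrightarrow> a i = a' i \<and> b i = b' i"
  shows "Mart \<phi> a b n = Mart \<phi> a' b' n"
  unfolding Mart_def Dm_def using assms by (intro sum.cong refl) auto

lemma Qf_bound:
  assumes "\<And>x y. \<bar>\<phi> x y\<bar> \<le> K"
  shows "\<bar>Qf \<phi> k s\<bar> \<le> K"
proof -
  have "\<bar>Qf \<phi> k s\<bar> \<le> (\<Sum>j\<in>UNIV. \<Sum>u\<in>U. \<bar>tr k s j u * \<phi> j (s + u)\<bar>)"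
    unfolding Qf_def by (rule order.trans[OF sum_abs sum_mono]) (rule sum_abs)
  also have "\<dots> \<le> (\<Sum>j\<in>UNIV. \<Sum>u\<in>U. tr k s j u * K)"
    by (intro sum_mono) (simp add: abs_mult tr_nn mult_left_mono assms)
  also have "\<dots> = K" by (simp add: sum_distrib_right[symmetric] tr_sum)
  finally show ?thesis .
qed

lemma Dm_bound:
  assumes "\<And>x y. \<bar>\<phi> x y\<bar> \<le> K"
  shows "\<bar>Dm \<phi> a b k\<bar> \<le> 2 * K"
  using Qf_bound[where \<phi>=\<phi> and K=K and k="a k" and s="b k", OF assms] assms[of "a (Suc k)" "b (Suc k)"]
  unfolding Dm_def by linarith

lemma Mart2:
  assumes K: "\<And>x y. \<bar>\<phi> x y\<bar> \<le> K"
  shows "(\<Sum>xs\<in>V n. (Mart \<phi> (ax xs) (bx xs) n)^2 * w xs) \<le> 4 * K^2 * n"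
proof (induction n)
  case 0
  then show ?case by (simp add: Mart_def)
next
  case (Suc n)
  have step: "(\<Sum>j\<in>UNIV. \<Sum>u\<in>U. (Mart \<phi> (ax (ext ys j u)) (bx (ext ys j u)) (Suc n))^2 * w (ext ys j u))
      \<le> w ys * ((Mart \<phi> (ax ys) (bx ys) n)^2 + 4 * K^2)" if ys: "ys \<in> V n" for ys
  proof -
    have l: "length ys = Suc n" using V_len[OF ys] by auto
    have lst: "last ys = ys ! n" using l last_conv_nth[of ys] by fastforce
    define M where "M = Mart \<phi> (ax ys) (bx ys) n"
    define k where "k = fst (last ys)"
    define s where "s = snd (last ys)"
    define d where "d j u = \<phi> j (s + u) - Qf \<phi> k s" for j u
    have me: "Mart \<phi> (ax (ext ys j u)) (bx (ext ys j u)) (Suc n) = M + d j u" for j u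
    proof -
      have le: "ext ys j u ! i = ys ! i" if "i \<le> n" for i using that l by (simp add: ext_def nth_append)
      have en: "ext ys j u ! Suc n = (j, s + u)" using l by (simp add: ext_def nth_append s_def)
      have "Mart \<phi> (ax (ext ys j u)) (bx (ext ys j u)) n = M"
        unfolding M_def by (rule Mart_cong) (simp add: ax_def bx_def le)
      moreover have "Dm \<phi> (ax (ext ys j u)) (bx (ext ys j u)) n = d j u"
        by (simp add: Dm_def ax_def bx_def en le d_def k_def s_def lst)
      ultimately show ?thesis by (simp add: Mart_def)
    qed
    have wl: "w (ext ys j u) = w ys * tr k s j u" for j u by (simp add: w_ext[OF ys] k_def s_def)
    have d0: "(\<Sum>j\<in>UNIV. \<Sum>u\<in>U. tr k s j u * d j u) = 0"
      by (simp add: d_def right_diff_distrib sum_subtractf sum_distrib_right[symmetric] tr_sum Qf_def)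
    have dK: "(d j u)^2 \<le> 4 * K^2" for j u
    proof -
      have "\<bar>d j u\<bar> \<le> 2 * K" using Qf_bound[where \<phi>=\<phi> and K=K and k=k and s=s, OF K] K[of j "s + u"] unfolding d_def by linarith
      then have "\<bar>d j u\<bar>^2 \<le> (2 * K)^2" by (rule power_mono) simp
      then show ?thesis by (simp add: power_mult_distrib)
    qed
    have "(\<Sum>j\<in>UNIV. \<Sum>u\<in>U. (M + d j u)^2 * (w ys * tr k s j u))
        = w ys * (M^2 * (\<Sum>j\<in>UNIV. \<Sum>u\<in>U. tr k s j u) + 2 * M * (\<Sum>j\<in>UNIV. \<Sum>u\<in>U. tr k s j u * d j u)
            + (\<Sum>j\<in>UNIV. \<Sum>u\<in>U. tr k s j u * (d j u)^2))"
      by (simp add: power2_eq_square algebra_simps sum.distrib sum_distrib_left)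
    also have "\<dots> = w ys * (M^2 + (\<Sum>j\<in>UNIV. \<Sum>u\<in>U. tr k s j u * (d j u)^2))"
      by (simp add: d0 tr_sum)
    also have "\<dots> \<le> w ys * (M^2 + (\<Sum>j\<in>UNIV. \<Sum>u\<in>U. tr k s j u * (4 * K^2)))"
      by (intro mult_left_mono add_left_mono sum_mono w_nn) (simp_all add: mult_left_mono tr_nn dK)
    also have "\<dots> = w ys * (M^2 + 4 * K^2)"
      by (simp add: sum_distrib_right[symmetric] tr_sum)
    finally show ?thesis by (simp add: me wl M_def)
  qed
  have "(\<Sum>xs\<in>V (Suc n). (Mart \<phi> (ax xs) (bx xs) (Suc n))^2 * w xs)
     = (\<Sum>ys\<in>V n. \<Sum>j\<in>UNIV. \<Sum>u\<in>U. (Mart \<phi> (ax (ext ys j u)) (bx (ext ys j u)) (Suc n))^2 * w (ext ys j u))"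
    by (rule sum_V_Suc)
  also have "\<dots> \<le> (\<Sum>ys\<in>V n. w ys * ((Mart \<phi> (ax ys) (bx ys) n)^2 + 4 * K^2))"
    by (rule sum_mono) (rule step)
  also have "\<dots> = (\<Sum>ys\<in>V n. (Mart \<phi> (ax ys) (bx ys) n)^2 * w ys) + 4 * K^2"
    by (simp add: algebra_simps sum.distrib sum_distrib_left[symmetric] sum_distrib_right[symmetric] sum_w)
  also have "\<dots> \<le> 4 * K^2 * n + 4 * K^2" using Suc by simp
  finally show ?case by (simp add: algebra_simps)
qed

lemma Mart_prob:
  assumes K: "\<And>x y. \<bar>\<phi> x y\<bar> \<le> K" and a: "a > 0"
  shows "measure N {\<omega> \<in> space N. \<bar>Mart \<phi> (\<lambda>i. X i \<omega>) (\<lambda>i. Z i \<omega>) n\<bar> > a} \<le> 4 * K^2 * n / a^2"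
proof -
  let ?Q = "\<lambda>xs. \<bar>Mart \<phi> (ax xs) (bx xs) n\<bar> > a"
  have eq: "Mart \<phi> (\<lambda>i. X i \<omega>) (\<lambda>i. Z i \<omega>) n = Mart \<phi> (ax (pl n \<omega>)) (bx (pl n \<omega>)) n" for \<omega>
    by (rule Mart_cong) (simp add: ax_def bx_def pl_nth)
  have "measure N {\<omega> \<in> space N. \<bar>Mart \<phi> (\<lambda>i. X i \<omega>) (\<lambda>i. Z i \<omega>) n\<bar> > a}
      = measure N {\<omega> \<in> space N. ?Q (pl n \<omega>)}" by (simp add: eq)
  also have "\<dots> \<le> (\<Sum>xs\<in>{xs \<in> V n. ?Q xs}. w xs)" by (rule prob_bound)
  also have "\<dots> \<le> (\<Sum>xs\<in>{xs \<in> V n. ?Q xs}. (Mart \<phi> (ax xs) (bx xs) n)^2 / a^2 * w xs)"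
  proof (rule sum_mono)
    fix xs assume "xs \<in> {xs \<in> V n. ?Q xs}"
    then have "a^2 \<le> \<bar>Mart \<phi> (ax xs) (bx xs) n\<bar>^2" using a by (intro power_mono) auto
    then have "1 \<le> (Mart \<phi> (ax xs) (bx xs) n)^2 / a^2" using a by simp
    then show "w xs \<le> (Mart \<phi> (ax xs) (bx xs) n)^2 / a^2 * w xs"
      using w_nn[of xs] by (metis mult_left_mono mult.commute mult.right_neutral)
  qed
  also have "\<dots> \<le> (\<Sum>xs\<in>V n. (Mart \<phi> (ax xs) (bx xs) n)^2 / a^2 * w xs)"
    by (rule sum_mono2) (auto simp: V_fin w_nn)
  also have "\<dots> = (\<Sum>xs\<in>V n. (Mart \<phi> (ax xs) (bx xs) n)^2 * w xs) / a^2"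
    by (simp add: sum_divide_distrib)
  also have "\<dots> \<le> 4 * K^2 * n / a^2"
    by (rule divide_right_mono[OF Mart2[OF K]]) simp
  finally show ?thesis .
qed

lemma Mart_sets: "{\<omega> \<in> space N. c < \<bar>Mart \<phi> (\<lambda>i. X i \<omega>) (\<lambda>i. Z i \<omega>) n\<bar>} \<in> sets N"
proof -
  have eq: "Mart \<phi> (\<lambda>i. X i \<omega>) (\<lambda>i. Z i \<omega>) n = Mart \<phi> (ax (pl n \<omega>)) (bx (pl n \<omega>)) n" for \<omega>
    by (rule Mart_cong) (simp add: ax_def bx_def pl_nth)
  show ?thesis unfolding eq by (rule pred_sets)
qed

lemma Mart_diff:
  assumes K: "\<And>x y. \<bar>\<phi> x y\<bar> \<le> K"
  shows "\<bar>Mart \<phi> a b (i + d) - Mart \<phi> a b i\<bar> \<le> d * (2 * K)"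
proof (induction d)
  case 0 then show ?case by simp
next
  case (Suc d)
  have "Mart \<phi> a b (i + Suc d) = Mart \<phi> a b (i + d) + Dm \<phi> a b (i + d)"
    by (simp add: Mart_def)
  then show ?case using Suc Dm_bound[where \<phi>=\<phi> and K=K and a=a and b=b and k="i+d", OF K]
    by (simp add: algebra_simps)
qed

lemma hsum_bound:
  assumes K: "\<And>x y. \<bar>\<phi> x y\<bar> \<le> K" and dl: "\<And>k s. \<bar>Qf \<phi> k s - P\<phi> k s\<bar> \<le> \<delta>"
  shows "\<bar>\<Sum>k<n. \<phi> (a k) (b k) - P\<phi> (a k) (b k)\<bar> \<le> \<bar>Mart \<phi> a b n\<bar> + 2 * K + n * \<delta>"
proof -
  have "(\<Sum>k<n. \<phi> (a k) (b k) - P\<phi> (a k) (b k)) =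
     (\<Sum>k<n. \<phi> (a k) (b k) - \<phi> (a (Suc k)) (b (Suc k))) + Mart \<phi> a b n +
     (\<Sum>k<n. Qf \<phi> (a k) (b k) - P\<phi> (a k) (b k))"
    unfolding Mart_def Dm_def sum.distrib[symmetric] by (intro sum.cong) auto
  also have "(\<Sum>k<n. \<phi> (a k) (b k) - \<phi> (a (Suc k)) (b (Suc k))) = \<phi> (a 0) (b 0) - \<phi> (a n) (b n)"
    by (rule sum_lessThan_telescope')
  finally have e: "(\<Sum>k<n. \<phi> (a k) (b k) - P\<phi> (a k) (b k)) =
     \<phi> (a 0) (b 0) - \<phi> (a n) (b n) + Mart \<phi> a b n + (\<Sum>k<n. Qf \<phi> (a k) (b k) - P\<phi> (a k) (b k))" .
  have s: "\<bar>\<Sum>k<n. Qf \<phi> (a k) (b k) - P\<phi> (a k) (b k)\<bar> \<le> n * \<delta>"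
  proof -
    have "\<bar>\<Sum>k<n. Qf \<phi> (a k) (b k) - P\<phi> (a k) (b k)\<bar> \<le> (\<Sum>k<n. \<bar>Qf \<phi> (a k) (b k) - P\<phi> (a k) (b k)\<bar>)"
      by (rule sum_abs)
    also have "\<dots> \<le> (\<Sum>k<n. \<delta>)" by (rule sum_mono) (rule dl)
    finally show ?thesis by simp
  qed
  show ?thesis unfolding e using s K[of "a 0" "b 0"] K[of "a n" "b n"] by linarith
qed

end

lemma unit_steps_finite: "finite (unit_steps :: (int^'d::finite) set)"
  unfolding unit_steps_def by (simp add: full_SetCompr_eq)

lemma rescale_step:
  fixes u :: "int^'d::finite"
  assumes u: "u \<in> unit_steps" and m: "m \<ge> 1"
  shows "norm (rescale m (s + u) - rescale m s) \<le> 1 / real m"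
proof -
  obtain i0 c where uc: "u = axis i0 c" and c: "\<bar>c\<bar> = 1"
    using u by (auto simp: unit_steps_def)
  have "rescale m (s + u) - rescale m s = (\<chi> i. real_of_int (u $ i) / real m)"
    by (simp add: rescale_def vec_eq_iff diff_divide_distrib[symmetric])
  then have "norm (rescale m (s + u) - rescale m s) \<le> (\<Sum>i\<in>UNIV. \<bar>(\<chi> i. real_of_int (u $ i) / real m) $ i\<bar>)"
    using norm_le_l1_cart by metis
  also have "\<dots> = (\<Sum>i\<in>UNIV. if i = i0 then 1 / real m else 0)"
    using c m by (intro sum.cong refl) (auto simp: uc axis_def)
  also have "\<dots> = 1 / real m" by simp
  finally show ?thesis .
qed

theorem proposition4p5:
  fixes P :: "'e::finite \<Rightarrow> 'e \<Rightarrow> real"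
    and \<mu> :: "'e \<Rightarrow> real"
    and p :: "'e \<Rightarrow> real ^ 'd::finite \<Rightarrow> int ^ 'd \<Rightarrow> real"
    and f :: "'e \<Rightarrow> real ^ 'd \<Rightarrow> real"
    and M :: "nat \<Rightarrow> 'a measure"
    and \<xi> :: "nat \<Rightarrow> nat \<Rightarrow> 'a \<Rightarrow> 'e"
    and S :: "nat \<Rightarrow> nat \<Rightarrow> 'a \<Rightarrow> int ^ 'd"
    and T :: real
  assumes P_stoch: "stochastic P"
    and P_irr: "irreducible_mc P"
    and P_aper: "aperiodic_mc P"
    and mu_inv: "invariant_prob P \<mu>"
    and mu_unique: "\<And>\<nu>. invariant_prob P \<nu> \<Longrightarrow> \<nu> = \<mu>"
    and p_nonneg: "\<And>k y u. p k y u \<ge> 0"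
    and p_supp: "\<And>k y u. u \<notin> unit_steps \<Longrightarrow> p k y u = 0"
    and p_sum: "\<And>k y. (\<Sum>u\<in>unit_steps. p k y u) = 1"
    and p_C2: "\<And>k u. \<exists>D1 :: real ^ 'd \<Rightarrow> real ^ 'd. \<exists>D2 :: real ^ 'd \<Rightarrow> real ^ 'd ^ 'd.
         (\<forall>y. ((\<lambda>z. p k z u) has_derivative (\<lambda>h. D1 y \<bullet> h)) (at y)) \<and>
         (\<forall>y. (D1 has_derivative (\<lambda>h. D2 y *v h)) (at y)) \<and>
         continuous_on UNIV D2 \<and>
         bounded (range D1) \<and> bounded (range D2)"
    and g_centered: "\<And>y. (\<Sum>k\<in>UNIV. \<mu> k *\<^sub>R drift p k y) = 0"
    and f_bounded: "\<exists>B. \<forall>k y. \<bar>f k y\<bar> \<le> B"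
    and f_lipschitz: "\<exists>L. \<forall>k y z. \<bar>f k y - f k z\<bar> \<le> L * norm (y - z)"
    and M_prob: "\<And>m. m \<ge> 1 \<Longrightarrow> prob_space (M m)"
    and xi_meas: "\<And>m n. m \<ge> 1 \<Longrightarrow> \<xi> m n \<in> measurable (M m) (count_space UNIV)"
    and S_meas: "\<And>m n. m \<ge> 1 \<Longrightarrow> S m n \<in> measurable (M m) (count_space UNIV)"
    and S0: "\<And>m \<omega>. m \<ge> 1 \<Longrightarrow> \<omega> \<in> space (M m) \<Longrightarrow> S m 0 \<omega> = 0"
    and chain_law: "\<And>m n (ks :: nat \<Rightarrow> 'e) (ss :: nat \<Rightarrow> int ^ 'd). m \<ge> 1 \<Longrightarrow> ss 0 = 0 \<Longrightarrow>
         measure (M m) {\<omega> \<in> space (M m). \<forall>i\<le>n. \<xi> m i \<omega> = ks i \<and> S m i \<omega> = ss i}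
       = measure (M m) {\<omega> \<in> space (M m). \<xi> m 0 \<omega> = ks 0} *
         (\<Prod>i<n. P (ks i) (ks (Suc i)) * p (ks i) (rescale m (ss i)) (ss (Suc i) - ss i))"
    and T_nonneg: "T \<ge> 0"
  shows "\<forall>\<epsilon>>0. ((\<lambda>m. measure (M m) {\<omega> \<in> space (M m).
            (SUP t\<in>{0..T}. \<bar>(\<Sum>k<nat \<lfloor>real m ^ 2 * t\<rfloor>. f (\<xi> m k \<omega>) (rescale m (S m k \<omega>)))
                            - (\<Sum>k<nat \<lfloor>real m ^ 2 * t\<rfloor>. fbar f \<mu> (rescale m (S m k \<omega>)))\<bar>
                          / real m ^ 2) > \<epsilon>}) \<longlonglongrightarrow> 0)"
proof (intro allI impI)
  fix \<epsilon> :: real assume eps: "\<epsilon> > 0"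
  obtain B where B: "\<And>k y. \<bar>f k y\<bar> \<le> B" using f_bounded by blast
  obtain L where L: "\<And>k y z. \<bar>f k y - f k z\<bar> \<le> L * norm (y - z)" using f_lipschitz by blast
  have mu_nn: "\<And>i. \<mu> i \<ge> 0" and mu_sum: "(\<Sum>i\<in>UNIV. \<mu> i) = 1"
    using mu_inv by (auto simp: invariant_prob_def)
  define h where "h i y = f i y - fbar f \<mu> y" for i y
  have fbarB: "\<bar>fbar f \<mu> y\<bar> \<le> B" for y
  proof -
    have "\<bar>fbar f \<mu> y\<bar> \<le> (\<Sum>i\<in>UNIV. \<bar>f i y * \<mu> i\<bar>)" unfolding fbar_def by (rule sum_abs)
    also have "\<dots> \<le> (\<Sum>i\<in>UNIV. B * \<mu> i)"
      by (intro sum_mono) (simp add: abs_mult mu_nn B mult_right_mono)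
    also have "\<dots> = B" by (simp add: sum_distrib_left[symmetric] mu_sum)
    finally show ?thesis .
  qed
  have fbarL: "\<bar>fbar f \<mu> y - fbar f \<mu> z\<bar> \<le> L * norm (y - z)" for y z
  proof -
    have "\<bar>fbar f \<mu> y - fbar f \<mu> z\<bar> = \<bar>\<Sum>i\<in>UNIV. (f i y - f i z) * \<mu> i\<bar>"
      by (simp add: fbar_def sum_subtractf left_diff_distrib)
    also have "\<dots> \<le> (\<Sum>i\<in>UNIV. \<bar>(f i y - f i z) * \<mu> i\<bar>)" by (rule sum_abs)
    also have "\<dots> \<le> (\<Sum>i\<in>UNIV. L * norm (y - z) * \<mu> i)"
      by (intro sum_mono) (simp add: abs_mult mu_nn L mult_right_mono)
    also have "\<dots> = L * norm (y - z)" by (simp add: sum_distrib_left[symmetric] mu_sum)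
    finally show ?thesis .
  qed
  have hB: "\<bar>h i y\<bar> \<le> 2 * B" for i y using B[of i y] fbarB[of y] unfolding h_def by linarith
  have hL: "\<bar>h i y - h i z\<bar> \<le> (2 * L) * norm (y - z)" for i y z
    using L[of i y z] fbarL[of y z] unfolding h_def by linarith
  have hc: "(\<Sum>i\<in>UNIV. \<mu> i * h i y) = 0" for y
    by (simp add: h_def right_diff_distrib sum_subtractf sum_distrib_right[symmetric] mu_sum)
      (simp add: fbar_def mult.commute)
  obtain \<phi>0 K Lp where phi_eq: "\<And>i y. \<phi>0 i y - (\<Sum>j\<in>UNIV. P i j * \<phi>0 j y) = h i y"
    and phiK: "\<And>i y. \<bar>\<phi>0 i y\<bar> \<le> K" and phiL: "\<And>i y z. \<bar>\<phi>0 i y - \<phi>0 i z\<bar> \<le> Lp * norm (y - z)"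
    using poisson[OF P_stoch mu_inv mu_unique hB hL hc] by blast
  define Lq where "Lq = \<bar>Lp\<bar>"
  have Lq0: "Lq \<ge> 0" by (simp add: Lq_def)
  have phiLq: "\<bar>\<phi>0 i y - \<phi>0 i z\<bar> \<le> Lq * norm (y - z)" for i y z
    using phiL[of i y z] by (simp add: Lq_def) (metis abs_ge_self mult_right_mono norm_ge_zero order.trans)
  have K0: "K \<ge> 0" using phiK by (meson abs_ge_zero order.trans)
  have B0: "B \<ge> 0" using B by (meson abs_ge_zero order.trans)
  define C where "C = 16 * K^2 * T * (T + 1) / \<epsilon>^2"
  define m0 where "m0 = nat \<lceil>2 * (4 * K + T * Lq) / \<epsilon>\<rceil> + 1"
  have bound: "measure (M m) {\<omega> \<in> space (M m).
            (SUP t\<in>{0..T}. \<bar>(\<Sum>k<nat \<lfloor>real m ^ 2 * t\<rfloor>. f (\<xi> m k \<omega>) (rescale m (S m k \<omega>)))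
                            - (\<Sum>k<nat \<lfloor>real m ^ 2 * t\<rfloor>. fbar f \<mu> (rescale m (S m k \<omega>)))\<bar>
                          / real m ^ 2) > \<epsilon>} \<le> C / real m" if mm0: "m \<ge> m0" for m
  proof -
    have m1: "m \<ge> 1" using mm0 by (simp add: m0_def)
    have mbig: "real m \<ge> 2 * (4 * K + T * Lq) / \<epsilon>"
    proof -
      have "2 * (4 * K + T * Lq) / \<epsilon> \<le> real (nat \<lceil>2 * (4 * K + T * Lq) / \<epsilon>\<rceil>)" by (rule real_nat_ceiling_ge)
      also have "\<dots> \<le> real m" using mm0 unfolding m0_def by linarith
      finally show ?thesis .
    qed
    have mpos: "real m > 0" using m1 by simp
    define tr where "tr k s j u = P k j * p k (rescale m s) u" for k s j u
    interpret pc: pchain "M m" "\<xi> m" "S m" tr unit_steps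
    proof (rule pchain.intro[OF M_prob[OF m1]], rule pchain_axioms.intro)
      show "\<xi> m n \<in> measurable (M m) (count_space UNIV)" for n using xi_meas m1 by blast
      show "S m n \<in> measurable (M m) (count_space UNIV)" for n using S_meas m1 by blast
      show "\<omega> \<in> space (M m) \<Longrightarrow> S m 0 \<omega> = 0" for \<omega> using S0 m1 by blast
      show "0 \<le> tr k s j u" for k s j u
        using P_stoch p_nonneg by (simp add: tr_def stochastic_def)
      show "(\<Sum>j\<in>UNIV. \<Sum>u\<in>unit_steps. tr k s j u) = 1" for k s
        using P_stoch p_sum by (simp add: tr_def stochastic_def sum_distrib_left[symmetric])
      show "finite (unit_steps :: (int^'d) set)" by (rule unit_steps_finite)
      show "measure (M m) {\<omega> \<in> space (M m). \<forall>i\<le>n. \<xi> m i \<omega> = ks i \<and> S m i \<omega> = ss i} =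
        measure (M m) {\<omega> \<in> space (M m). \<xi> m 0 \<omega> = ks 0} *
        (\<Prod>i<n. tr (ks i) (ss i) (ks (Suc i)) (ss (Suc i) - ss i))" if "ss 0 = 0" for n ks ss
        using chain_law[of m ss n ks, OF m1 that] by (simp add: tr_def)
    qed
    define \<phi>m where "\<phi>m j s = \<phi>0 j (rescale m s)" for j s
    have phimK: "\<bar>\<phi>m x y\<bar> \<le> K" for x y by (simp add: \<phi>m_def phiK)
    define P\<phi> where "P\<phi> k s = (\<Sum>j\<in>UNIV. P k j * \<phi>0 j (rescale m s))" for k s
    have dl: "\<bar>pc.Qf \<phi>m k s - P\<phi> k s\<bar> \<le> Lq / real m" for k s
    proof -
      have Pnn: "\<And>i j. P i j \<ge> 0" and Psum: "\<And>i. (\<Sum>j\<in>UNIV. P i j) = 1"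
        using P_stoch by (auto simp: stochastic_def)
      have "pc.Qf \<phi>m k s - P\<phi> k s =
          (\<Sum>j\<in>UNIV. \<Sum>u\<in>unit_steps. P k j * p k (rescale m s) u * (\<phi>0 j (rescale m (s + u)) - \<phi>0 j (rescale m s)))"
        by (simp add: pc.Qf_def P\<phi>_def \<phi>m_def tr_def right_diff_distrib sum_subtractf
            sum_distrib_left[symmetric] sum_distrib_right[symmetric] p_sum mult.assoc)
      also have "\<bar>\<dots>\<bar> \<le> (\<Sum>j\<in>UNIV. \<Sum>u\<in>unit_steps. P k j * p k (rescale m s) u * (Lq / real m))"
      proof (rule order.trans[OF sum_abs sum_mono], rule order.trans[OF sum_abs sum_mono])
        fix j u assume u: "u \<in> (unit_steps :: (int^'d) set)"
        have "\<bar>\<phi>0 j (rescale m (s + u)) - \<phi>0 j (rescale m s)\<bar> \<le> Lq * norm (rescale m (s + u) - rescale m s)"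
          by (rule phiLq)
        also have "\<dots> \<le> Lq * (1 / real m)" by (rule mult_left_mono[OF rescale_step[OF u m1] Lq0])
        finally have "\<bar>\<phi>0 j (rescale m (s + u)) - \<phi>0 j (rescale m s)\<bar> \<le> Lq / real m" by simp
        moreover have nn: "0 \<le> P k j * p k (rescale m s) u" using Pnn p_nonneg by simp
        ultimately show "\<bar>P k j * p k (rescale m s) u * (\<phi>0 j (rescale m (s + u)) - \<phi>0 j (rescale m s))\<bar>
            \<le> P k j * p k (rescale m s) u * (Lq / real m)"
          by (metis abs_mult abs_of_nonneg mult_left_mono)
      qed
      also have "\<dots> = (\<Sum>j\<in>UNIV. P k j * (\<Sum>u\<in>unit_steps. p k (rescale m s) u)) * (Lq / real m)"
        by (simp only: sum_distrib_left sum_distrib_right mult.assoc)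
      also have "\<dots> = Lq / real m" by (simp add: p_sum Psum)
      finally show ?thesis .
    qed
    have hs: "\<bar>\<Sum>k<n. h (\<xi> m k \<omega>) (rescale m (S m k \<omega>))\<bar>
        \<le> \<bar>pc.Mart \<phi>m (\<lambda>i. \<xi> m i \<omega>) (\<lambda>i. S m i \<omega>) n\<bar> + 2 * K + n * (Lq / real m)" for n \<omega>
    proof -
      have "h (\<xi> m k \<omega>) (rescale m (S m k \<omega>)) = \<phi>m (\<xi> m k \<omega>) (S m k \<omega>) - P\<phi> (\<xi> m k \<omega>) (S m k \<omega>)" for k
        using phi_eq by (simp add: \<phi>m_def P\<phi>_def)
      then show ?thesis using pc.hsum_bound[where \<phi>=\<phi>m and K=K and P\<phi>=P\<phi> and \<delta>="Lq / real m"
          and a="\<lambda>i. \<xi> m i \<omega>" and b="\<lambda>i. S m i \<omega>" and n=n, OF phimK dl] by simp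
    qed
    define Nn where "Nn = nat \<lfloor>real m ^ 2 * T\<rfloor>"
    define J where "J = Nn div m"
    define a where "a = \<epsilon> * real m ^ 2 / 2"
    have a0: "a > 0" using eps mpos by (simp add: a_def)
    have NnT: "real Nn \<le> real m ^ 2 * T" using T_nonneg by (simp add: Nn_def)
    have sub: "{\<omega> \<in> space (M m).
            (SUP t\<in>{0..T}. \<bar>(\<Sum>k<nat \<lfloor>real m ^ 2 * t\<rfloor>. f (\<xi> m k \<omega>) (rescale m (S m k \<omega>)))
                            - (\<Sum>k<nat \<lfloor>real m ^ 2 * t\<rfloor>. fbar f \<mu> (rescale m (S m k \<omega>)))\<bar>
                          / real m ^ 2) > \<epsilon>}
        \<subseteq> (\<Union>j\<in>{..J}. {\<omega> \<in> space (M m). a < \<bar>pc.Mart \<phi>m (\<lambda>i. \<xi> m i \<omega>) (\<lambda>i. S m i \<omega>) (j * m)\<bar>})"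
    proof
      fix \<omega> assume "\<omega> \<in> {\<omega> \<in> space (M m).
            (SUP t\<in>{0..T}. \<bar>(\<Sum>k<nat \<lfloor>real m ^ 2 * t\<rfloor>. f (\<xi> m k \<omega>) (rescale m (S m k \<omega>)))
                            - (\<Sum>k<nat \<lfloor>real m ^ 2 * t\<rfloor>. fbar f \<mu> (rescale m (S m k \<omega>)))\<bar>
                          / real m ^ 2) > \<epsilon>}"
      then have om: "\<omega> \<in> space (M m)" and sup: "\<epsilon> < (SUP t\<in>{0..T}. \<bar>(\<Sum>k<nat \<lfloor>real m ^ 2 * t\<rfloor>. f (\<xi> m k \<omega>) (rescale m (S m k \<omega>)))
                            - (\<Sum>k<nat \<lfloor>real m ^ 2 * t\<rfloor>. fbar f \<mu> (rescale m (S m k \<omega>)))\<bar>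
                          / real m ^ 2)" by auto
      define G where "G n = \<bar>\<Sum>k<n. h (\<xi> m k \<omega>) (rescale m (S m k \<omega>))\<bar>" for n
      have Geq: "\<bar>(\<Sum>k<n. f (\<xi> m k \<omega>) (rescale m (S m k \<omega>))) - (\<Sum>k<n. fbar f \<mu> (rescale m (S m k \<omega>)))\<bar> = G n" for n
        by (simp add: G_def h_def sum_subtractf)
      have nle: "nat \<lfloor>real m ^ 2 * t\<rfloor> \<le> Nn" if "t \<in> {0..T}" for t
        unfolding Nn_def using that by (intro nat_mono floor_mono mult_left_mono) auto
      have Gb: "G n \<le> real Nn * (2 * B)" if "n \<le> Nn" for n
      proof -
        have "G n \<le> (\<Sum>k<n. \<bar>h (\<xi> m k \<omega>) (rescale m (S m k \<omega>))\<bar>)" unfolding G_def by (rule sum_abs)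
        also have "\<dots> \<le> (\<Sum>k<n. 2 * B)" by (rule sum_mono) (rule hB)
        also have "\<dots> = real n * (2 * B)" by simp
        also have "\<dots> \<le> real Nn * (2 * B)" using that B0 by (intro mult_right_mono) auto
        finally show ?thesis .
      qed
      have bdd: "bdd_above ((\<lambda>t. G (nat \<lfloor>real m ^ 2 * t\<rfloor>) / real m ^ 2) ` {0..T})"
        by (rule bdd_aboveI2[where M="real Nn * (2 * B) / real m ^ 2"])
           (use nle Gb in \<open>auto intro!: divide_right_mono\<close>)
      from sup obtain t where t: "t \<in> {0..T}" and tG: "\<epsilon> < G (nat \<lfloor>real m ^ 2 * t\<rfloor>) / real m ^ 2"
        unfolding Geq using less_cSUP_iff[OF _ bdd] T_nonneg by auto
      define n where "n = nat \<lfloor>real m ^ 2 * t\<rfloor>"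
      have nN: "n \<le> Nn" using nle[OF t] by (simp add: n_def)
      have Gn: "\<epsilon> * real m ^ 2 < G n" using tG mpos by (simp add: n_def field_simps)
      have nLq: "real n * (Lq / real m) \<le> real m * T * Lq"
      proof -
        have "real n * (Lq / real m) \<le> real Nn * (Lq / real m)" using nN Lq0 mpos
          by (intro mult_right_mono) auto
        also have "\<dots> \<le> real m ^ 2 * T * (Lq / real m)" using NnT Lq0 mpos by (intro mult_right_mono) auto
        also have "\<dots> = real m * T * Lq" using mpos by (simp add: power2_eq_square field_simps)
        finally show ?thesis .
      qed
      define j where "j = n div m"
      have jJ: "j \<le> J" unfolding j_def J_def using nN by (rule div_le_mono)
      have nsplit: "n = j * m + n mod m" by (simp add: j_def)
      have md: "\<bar>pc.Mart \<phi>m (\<lambda>i. \<xi> m i \<omega>) (\<lambda>i. S m i \<omega>) n - pc.Mart \<phi>m (\<lambda>i. \<xi> m i \<omega>) (\<lambda>i. S m i \<omega>) (j * m)\<bar>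
           \<le> real m * (2 * K)"
      proof -
        have "\<bar>pc.Mart \<phi>m (\<lambda>i. \<xi> m i \<omega>) (\<lambda>i. S m i \<omega>) (j * m + n mod m) - pc.Mart \<phi>m (\<lambda>i. \<xi> m i \<omega>) (\<lambda>i. S m i \<omega>) (j * m)\<bar>
           \<le> real (n mod m) * (2 * K)" by (rule pc.Mart_diff[OF phimK])
        also have "\<dots> \<le> real m * (2 * K)" using K0 m1
          by (intro mult_right_mono) (auto simp: less_imp_le)
        finally show ?thesis using nsplit by metis
      qed
      have big: "real m * (4 * K + T * Lq) \<le> a"
      proof -
        have "2 * (4 * K + T * Lq) \<le> \<epsilon> * real m" using mbig eps by (simp add: field_simps)
        then have "real m * (2 * (4 * K + T * Lq)) \<le> real m * (\<epsilon> * real m)" using mpos by (intro mult_left_mono) auto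
        then show ?thesis by (simp add: a_def power2_eq_square field_simps)
      qed
      have "2 * K \<le> real m * (2 * K)" using K0 m1 mult_right_mono[of 1 "real m" "2 * K"] by simp
      moreover have "real m * (4 * K + T * Lq) = 2 * (real m * (2 * K)) + real m * T * Lq"
        by (simp add: algebra_simps)
      moreover have hsn: "\<bar>\<Sum>k<n. h (\<xi> m k \<omega>) (rescale m (S m k \<omega>))\<bar>
        \<le> \<bar>pc.Mart \<phi>m (\<lambda>i. \<xi> m i \<omega>) (\<lambda>i. S m i \<omega>) n\<bar> + 2 * K + n * (Lq / real m)" by (rule hs)
      ultimately have "a < \<bar>pc.Mart \<phi>m (\<lambda>i. \<xi> m i \<omega>) (\<lambda>i. S m i \<omega>) (j * m)\<bar>"
        using Gn md nLq big unfolding G_def a_def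
        using \<open>real m * (4 * K + T * Lq) = 2 * (real m * (2 * K)) + real m * T * Lq\<close>
        by linarith
      then show "\<omega> \<in> (\<Union>j\<in>{..J}. {\<omega> \<in> space (M m). a < \<bar>pc.Mart \<phi>m (\<lambda>i. \<xi> m i \<omega>) (\<lambda>i. S m i \<omega>) (j * m)\<bar>})"
        using jJ om by auto
    qed
    have "measure (M m) {\<omega> \<in> space (M m).
            (SUP t\<in>{0..T}. \<bar>(\<Sum>k<nat \<lfloor>real m ^ 2 * t\<rfloor>. f (\<xi> m k \<omega>) (rescale m (S m k \<omega>)))
                            - (\<Sum>k<nat \<lfloor>real m ^ 2 * t\<rfloor>. fbar f \<mu> (rescale m (S m k \<omega>)))\<bar>
                          / real m ^ 2) > \<epsilon>}
        \<le> measure (M m) (\<Union>j\<in>{..J}. {\<omega> \<in> space (M m). a < \<bar>pc.Mart \<phi>m (\<lambda>i. \<xi> m i \<omega>) (\<lambda>i. S m i \<omega>) (j * m)\<bar>})"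
      by (rule pc.finite_measure_mono[OF sub]) (auto intro!: pc.Mart_sets)
    also have "\<dots> \<le> (\<Sum>j\<in>{..J}. measure (M m) {\<omega> \<in> space (M m). a < \<bar>pc.Mart \<phi>m (\<lambda>i. \<xi> m i \<omega>) (\<lambda>i. S m i \<omega>) (j * m)\<bar>})"
      by (rule measure_UNION_le) (auto intro!: pc.Mart_sets)
    also have "\<dots> \<le> (\<Sum>j\<in>{..J}. 4 * K^2 * real Nn / a^2)"
    proof (rule sum_mono)
      fix j assume "j \<in> {..J}"
      then have "j * m \<le> Nn" unfolding J_def using div_times_less_eq_dividend[of Nn m]
        by (metis atMost_iff mult_le_mono1 order.trans)
      then have "real (j * m) \<le> real Nn" by (simp only: of_nat_le_iff)
      then have "4 * K^2 * real (j * m) / a^2 \<le> 4 * K^2 * real Nn / a^2"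
        by (intro divide_right_mono mult_left_mono) auto
      then show "measure (M m) {\<omega> \<in> space (M m). a < \<bar>pc.Mart \<phi>m (\<lambda>i. \<xi> m i \<omega>) (\<lambda>i. S m i \<omega>) (j * m)\<bar>}
          \<le> 4 * K^2 * real Nn / a^2"
        using pc.Mart_prob[where \<phi>=\<phi>m and K=K and a=a and n="j*m", OF phimK a0] by linarith
    qed
    also have "\<dots> = real (J + 1) * (4 * K^2 * real Nn / a^2)" by simp
    also have "\<dots> \<le> C / real m"
    proof -
      have JT: "real J \<le> real m * T"
      proof -
        have "real J * real m \<le> real Nn" unfolding J_def
          by (metis div_times_less_eq_dividend of_nat_le_iff of_nat_mult)
        also have "\<dots> \<le> (real m * T) * real m" using NnT by (simp add: power2_eq_square field_simps)
        finally show ?thesis using mpos by (simp add: mult.commute)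
      qed
      have J1: "real (J + 1) \<le> (T + 1) * real m" using JT m1 by (simp add: algebra_simps)
      have "real (J + 1) * (4 * K^2 * real Nn / a^2) \<le> ((T + 1) * real m) * (4 * K^2 * (real m ^ 2 * T) / a^2)"
        using J1 NnT K0 by (intro mult_mono divide_right_mono mult_left_mono) auto
      also have "\<dots> = C / real m"
        using mpos eps by (simp add: C_def a_def power2_eq_square field_simps)
      finally show ?thesis .
    qed
    finally show ?thesis .
  qed
  have lim: "(\<lambda>m. C / real m) \<longlonglongrightarrow> 0"
    by (intro tendsto_divide_0[OF tendsto_const] filterlim_at_top_imp_at_infinity filterlim_real_sequentially)
  show "(\<lambda>m. measure (M m) {\<omega> \<in> space (M m).
            (SUP t\<in>{0..T}. \<bar>(\<Sum>k<nat \<lfloor>real m ^ 2 * t\<rfloor>. f (\<xi> m k \<omega>) (rescale m (S m k \<omega>)))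
                            - (\<Sum>k<nat \<lfloor>real m ^ 2 * t\<rfloor>. fbar f \<mu> (rescale m (S m k \<omega>)))\<bar>
                          / real m ^ 2) > \<epsilon>}) \<longlonglongrightarrow> 0"
  proof (rule tendsto_sandwich[OF _ _ tendsto_const lim])
    show "\<forall>\<^sub>F m in sequentially. 0 \<le> measure (M m) {\<omega> \<in> space (M m).
            (SUP t\<in>{0..T}. \<bar>(\<Sum>k<nat \<lfloor>real m ^ 2 * t\<rfloor>. f (\<xi> m k \<omega>) (rescale m (S m k \<omega>)))
                            - (\<Sum>k<nat \<lfloor>real m ^ 2 * t\<rfloor>. fbar f \<mu> (rescale m (S m k \<omega>)))\<bar>
                          / real m ^ 2) > \<epsilon>}" by simp
    show "\<forall>\<^sub>F m in sequentially. measure (M m) {\<omega> \<in> space (M m).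
            (SUP t\<in>{0..T}. \<bar>(\<Sum>k<nat \<lfloor>real m ^ 2 * t\<rfloor>. f (\<xi> m k \<omega>) (rescale m (S m k \<omega>)))
                            - (\<Sum>k<nat \<lfloor>real m ^ 2 * t\<rfloor>. fbar f \<mu> (rescale m (S m k \<omega>)))\<bar>
                          / real m ^ 2) > \<epsilon>} \<le> C / real m"
      using bound by (intro eventually_sequentiallyI[of m0]) auto
  qed
qed

end
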